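(* Let $\mathcal{X}$ and $\mathcal{Y}$ be probability distributions over a finite set $\Theta$ with $D_{KL}(\mathcal{X}\|\mathcal{Y})\le\kappa$, and let $f:\Theta\to[0,1]$. If $\mathbb{E}_{x\sim\mathcal{X}}[f(x)]=1-\delta$, then $\mathbb{E}_{y\sim\mathcal{Y}}[f(y)]\ge(\delta^\delta e^{-\kappa})^{\frac{1}{1-\delta}}(1-\delta)$.
   Context: $D_{KL}(\mathcal{X}\|\mathcal{Y})=\sum_{\theta\in\mathrm{supp}(\mathcal{X})}\mathcal{X}(\theta)\log(\mathcal{X}(\theta)/\mathcal{Y}(\theta))$ with natural logarithm (it is $\infty$ if $\mathcal{Y}(\theta)=0$ for some $\theta\in\mathrm{supp}(\mathcal{X})$). Conventions: $0^0=1$, and when $\delta=1$ the expression $(\delta^\delta e^{-\kappa})^{\frac{1}{1-\delta}}(1-\delta)$ is defined to be $0$. *)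

theory Defs
  imports "HOL-Analysis.Analysis"
begin

definition is_distr :: "'a set \<Rightarrow> ('a \<Rightarrow> real) \<Rightarrow> bool" where
  "is_distr \<Theta> P \<longleftrightarrow> finite \<Theta> \<and> (\<forall>\<theta>\<in>\<Theta>. P \<theta> \<ge> 0) \<and> (\<Sum>\<theta>\<in>\<Theta>. P \<theta>) = 1"

definition KL :: "'a set \<Rightarrow> ('a \<Rightarrow> real) \<Rightarrow> ('a \<Rightarrow> real) \<Rightarrow> ereal" where
  "KL \<Theta> X Y =
     (if \<exists>\<theta>\<in>\<Theta>. X \<theta> > 0 \<and> Y \<theta> = 0 then \<infinity>
      else ereal (\<Sum>\<theta>\<in>{\<theta>\<in>\<Theta>. X \<theta> > 0}. X \<theta> * ln (X \<theta> / Y \<theta>)))"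

definition expect :: "'a set \<Rightarrow> ('a \<Rightarrow> real) \<Rightarrow> ('a \<Rightarrow> real) \<Rightarrow> real" where
  "expect \<Theta> P f = (\<Sum>\<theta>\<in>\<Theta>. P \<theta> * f \<theta>)"

definition selfpow :: "real \<Rightarrow> real" where
  "selfpow d = (if d = 0 then 1 else d powr d)"

definition kl_bound :: "real \<Rightarrow> real \<Rightarrow> real" where
  "kl_bound \<delta> \<kappa> =
     (if \<delta> = 1 then 0
      else ((selfpow \<delta> * exp (- \<kappa>)) powr (1 / (1 - \<delta>))) * (1 - \<delta>))"

end

theory Submission
  imports Defs
begin

lemma key_ineq:
  fixes x y c :: real
  assumes "x > 0" "y > 0" "c > 0"
  shows "x * ln (x / y) \<ge> x * ln c + x - y * c"
proof -
  have "ln (y * c / x) \<le> y * c / x - 1"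
    using assms by (intro ln_le_minus_one) auto
  hence "x * ln (y * c / x) \<le> x * (y * c / x - 1)"
    using assms by (intro mult_left_mono) auto
  also have "\<dots> = y * c - x" using assms by (simp add: field_simps)
  finally have 1: "x * ln (y * c / x) \<le> y * c - x" .
  have "ln (y * c / x) = ln y + ln c - ln x" using assms by (simp add: ln_div ln_mult)
  moreover have "ln (x / y) = ln x - ln y" using assms by (simp add: ln_div)
  ultimately have "ln (x / y) = ln c - ln (y * c / x)" by linarith
  hence "x * ln (x / y) = x * ln c - x * ln (y * c / x)" by (simp add: right_diff_distrib[symmetric])
  then show ?thesis using 1 by linarith
qed

theorem lemma5p2:
  fixes \<Theta> :: "'a set" and X Y f :: "'a \<Rightarrow> real" and \<kappa> \<delta> :: real
  assumes "finite \<Theta>"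
    and "is_distr \<Theta> X" and "is_distr \<Theta> Y"
    and "KL \<Theta> X Y \<le> ereal \<kappa>"
    and "\<forall>\<theta>\<in>\<Theta>. 0 \<le> f \<theta> \<and> f \<theta> \<le> 1"
    and "expect \<Theta> X f = 1 - \<delta>"
  shows "expect \<Theta> Y f \<ge> kl_bound \<delta> \<kappa>"
proof -
  have fin: "finite \<Theta>" by fact
  have Xnn: "\<And>t. t \<in> \<Theta> \<Longrightarrow> X t \<ge> 0" and sX: "(\<Sum>t\<in>\<Theta>. X t) = 1"
    using assms(2) by (auto simp: is_distr_def)
  have Ynn: "\<And>t. t \<in> \<Theta> \<Longrightarrow> Y t \<ge> 0" and sY: "(\<Sum>t\<in>\<Theta>. Y t) = 1"
    using assms(3) by (auto simp: is_distr_def)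
  have f0: "\<And>t. t \<in> \<Theta> \<Longrightarrow> f t \<ge> 0" and f1: "\<And>t. t \<in> \<Theta> \<Longrightarrow> f t \<le> 1"
    using assms(5) by auto
  define S where "S = {t\<in>\<Theta>. X t > 0}"
  have SS: "S \<subseteq> \<Theta>" by (auto simp: S_def)
  have finS: "finite S" using fin SS finite_subset by blast
  have noinf: "\<not> (\<exists>t\<in>\<Theta>. X t > 0 \<and> Y t = 0)"
    using assms(4) by (auto simp: KL_def split: if_splits)
  have KLle: "(\<Sum>t\<in>S. X t * ln (X t / Y t)) \<le> \<kappa>"
    using assms(4) noinf by (simp add: KL_def S_def)
  have YS: "\<And>t. t \<in> S \<Longrightarrow> Y t > 0"
    using noinf Ynn by (force simp: S_def)
  have XS: "\<And>t. t \<in> S \<Longrightarrow> X t > 0" by (simp add: S_def)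
  define A where "A = (\<Sum>t\<in>\<Theta>. X t * f t)"
  define p where "p = (\<Sum>t\<in>\<Theta>. Y t * f t)"
  have Ad: "A = 1 - \<delta>" using assms(6) by (simp add: A_def expect_def)
  have Bd: "(\<Sum>t\<in>\<Theta>. X t * (1 - f t)) = \<delta>"
    using sX Ad by (simp add: A_def algebra_simps sum_subtractf)
  have A0: "0 \<le> A" unfolding A_def using Xnn f0 by (intro sum_nonneg) auto
  have B0: "0 \<le> \<delta>" unfolding Bd[symmetric] using Xnn f1 by (intro sum_nonneg) auto
  have p0: "0 \<le> p" unfolding p_def using Ynn f0 by (intro sum_nonneg) auto
  have AS: "(\<Sum>t\<in>S. X t * f t) = A"
    unfolding A_def using fin SS Xnn by (intro sum.mono_neutral_left) (auto simp: S_def order.order_iff_strict)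
  have BS: "(\<Sum>t\<in>S. X t * (1 - f t)) = \<delta>"
    unfolding Bd[symmetric] using fin SS Xnn by (intro sum.mono_neutral_left) (auto simp: S_def order.order_iff_strict)
  have PS: "(\<Sum>t\<in>S. Y t * f t) \<le> p"
    unfolding p_def using fin SS Ynn f0 by (intro sum_mono2) auto
  have QS: "(\<Sum>t\<in>S. Y t * (1 - f t)) \<le> 1"
  proof -
    have "(\<Sum>t\<in>S. Y t * (1 - f t)) \<le> (\<Sum>t\<in>\<Theta>. Y t * (1 - f t))"
      using fin SS Ynn f1 by (intro sum_mono2) auto
    also have "\<dots> \<le> (\<Sum>t\<in>\<Theta>. Y t)"
      using Ynn f0 by (intro sum_mono) (auto simp: mult_left_le)
    finally show ?thesis using sY by simp
  qed
  have expY: "expect \<Theta> Y f = p" by (simp add: p_def expect_def)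
  show ?thesis
  proof (cases "\<delta> = 1")
    case True
    then show ?thesis using p0 expY by (simp add: kl_bound_def)
  next
    case False
    have Apos: "A > 0" using A0 Ad False by auto
    obtain t0 where t0: "t0 \<in> \<Theta>" "X t0 * f t0 > 0"
    proof (rule ccontr)
      assume "\<not> thesis"
      with that have "\<forall>t\<in>\<Theta>. X t * f t \<le> 0" by force
      hence "A \<le> 0" unfolding A_def by (intro sum_nonpos) auto
      with Apos show False by simp
    qed
    have "X t0 > 0" "f t0 > 0"
      using t0 Xnn[OF t0(1)] f0[OF t0(1)] by (auto simp: zero_less_mult_iff)
    hence "Y t0 > 0" using noinf Ynn t0(1) by force
    hence "Y t0 * f t0 > 0" using \<open>f t0 > 0\<close> by simp
    moreover have "Y t0 * f t0 \<le> p"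
      unfolding p_def using fin t0(1) Ynn f0 by (intro member_le_sum) auto
    ultimately have ppos: "p > 0" by simp
    define c1 where "c1 = A / p"
    have c1: "c1 > 0" using Apos ppos by (simp add: c1_def)
    have part1: "(\<Sum>t\<in>S. f t * (X t * ln (X t / Y t))) \<ge> A * ln c1"
    proof -
      have "(\<Sum>t\<in>S. f t * (X t * ln (X t / Y t))) \<ge>
            (\<Sum>t\<in>S. f t * (X t * ln c1 + X t - Y t * c1))"
        using SS f0 key_ineq[OF XS YS c1]
        by (intro sum_mono mult_left_mono) auto
      moreover have "(\<Sum>t\<in>S. f t * (X t * ln c1 + X t - Y t * c1))
          = ln c1 * (\<Sum>t\<in>S. X t * f t) + (\<Sum>t\<in>S. X t * f t) - c1 * (\<Sum>t\<in>S. Y t * f t)"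
        by (simp add: algebra_simps sum.distrib sum_subtractf sum_distrib_left)
      moreover have "c1 * (\<Sum>t\<in>S. Y t * f t) \<le> c1 * p"
        using PS c1 by (intro mult_left_mono) auto
      moreover have "c1 * p = A" using ppos by (simp add: c1_def)
      ultimately show ?thesis using AS by (simp add: algebra_simps)
    qed
    have part2: "(\<Sum>t\<in>S. (1 - f t) * (X t * ln (X t / Y t))) \<ge> \<delta> * ln \<delta>"
    proof (cases "\<delta> = 0")
      case True
      have "\<forall>t\<in>S. X t * (1 - f t) = 0"
        using BS True finS SS Xnn f1
        by (subst sum_nonneg_eq_0_iff[symmetric]) auto
      hence "(\<Sum>t\<in>S. (1 - f t) * (X t * ln (X t / Y t))) = 0"
        by (intro sum.neutral) (auto simp: algebra_simps)
      then show ?thesis using True by simp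
    next
      case False
      hence Bp: "\<delta> > 0" using B0 by simp
      have "(\<Sum>t\<in>S. (1 - f t) * (X t * ln (X t / Y t))) \<ge>
            (\<Sum>t\<in>S. (1 - f t) * (X t * ln \<delta> + X t - Y t * \<delta>))"
        using SS f1 key_ineq[OF XS YS Bp]
        by (intro sum_mono mult_left_mono) auto
      moreover have "(\<Sum>t\<in>S. (1 - f t) * (X t * ln \<delta> + X t - Y t * \<delta>))
          = ln \<delta> * (\<Sum>t\<in>S. X t * (1 - f t)) + (\<Sum>t\<in>S. X t * (1 - f t))
            - \<delta> * (\<Sum>t\<in>S. Y t * (1 - f t))"
        by (simp add: algebra_simps sum.distrib sum_subtractf sum_distrib_left)
      moreover have "\<delta> * (\<Sum>t\<in>S. Y t * (1 - f t)) \<le> \<delta> * 1"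
        using QS Bp by (intro mult_left_mono) auto
      ultimately show ?thesis using BS by (simp add: algebra_simps)
    qed
    have "(\<Sum>t\<in>S. X t * ln (X t / Y t)) =
          (\<Sum>t\<in>S. f t * (X t * ln (X t / Y t))) + (\<Sum>t\<in>S. (1 - f t) * (X t * ln (X t / Y t)))"
      by (simp add: sum.distrib[symmetric] algebra_simps)
    hence main: "A * ln c1 + \<delta> * ln \<delta> \<le> \<kappa>" using part1 part2 KLle by linarith
    have sp: "selfpow \<delta> * exp (- \<kappa>) = exp (\<delta> * ln \<delta> - \<kappa>)"
      using B0 by (auto simp: selfpow_def powr_def exp_diff exp_minus field_simps)
    have "kl_bound \<delta> \<kappa> = exp ((\<delta> * ln \<delta> - \<kappa>) / A) * A"
      using False Ad by (simp add: kl_bound_def sp powr_def)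
    also have "(\<delta> * ln \<delta> - \<kappa>) / A \<le> - ln c1"
      using main Apos by (simp add: divide_le_eq algebra_simps)
    hence "exp ((\<delta> * ln \<delta> - \<kappa>) / A) \<le> exp (- ln c1)" by simp
    hence "exp ((\<delta> * ln \<delta> - \<kappa>) / A) * A \<le> exp (- ln c1) * A"
      using Apos by (intro mult_right_mono) auto
    also have "exp (- ln c1) * A = p"
      using c1 Apos ppos by (simp add: exp_minus c1_def)
    finally show ?thesis using expY by simp
  qed
qed

end
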